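(* Let $r\ge 1$ be real and $n\ge1$ an integer. Then $$\frac{n}{n+1}\left(1+\frac{1}{n(n+2)}\right)^{1/r}\le \left(\frac{(n+1)\sum_{i=1}^{n} i^r}{n\sum_{i=1}^{n+1} i^r}\right)^{1/r}\le \frac{n}{n+1}\left(1+\frac{(n+1)^{r+1}-\sum_{i=1}^{n+1} i^r}{n^2\sum_{i=1}^{n+1} i^r}\right)^{1/r}.$$ If $0<r\le 1$, both inequalities hold with $\le$ replaced by $\ge$. *)

theory Defs
  imports Complex_Main
begin

definition S :: "nat \<Rightarrow> real \<Rightarrow> real" where
  "S n r = (\<Sum>i=1..n. real i powr r)"

end

theory Submission
  imports Defs "HOL-Analysis.Analysis"
begin


lemma powr_concave':
  assumes "0 < p" "p \<le> 1" shows "concave_on {0<..} (\<lambda>x::real. x powr p)"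
  unfolding concave_on_def
proof (rule f''_ge0_imp_convex[where f' = "\<lambda>x. - (p * x powr (p - 1))" and f'' = "\<lambda>x. - (p * ((p - 1) * x powr (p - 1 - 1)))"])
  show "convex {0::real<..}" by (simp add: convex_real_interval)
next
  fix x :: real assume "x \<in> {0<..}"
  then show "((\<lambda>x. - (x powr p)) has_real_derivative - (p * x powr (p - 1))) (at x)"
    by (auto intro!: derivative_eq_intros)
next
  fix x :: real assume "x \<in> {0<..}"
  then show "((\<lambda>x. - (p * x powr (p - 1))) has_real_derivative - (p * ((p - 1) * x powr (p - 1 - 1)))) (at x)"
    by (auto intro!: derivative_eq_intros)
next
  fix x :: real assume "x \<in> {0<..}"
  then show "0 \<le> - (p * ((p - 1) * x powr (p - 1 - 1)))"
    using assms mult_nonneg_nonpos[of p "(p-1)*x powr (p-1-1)"] mult_nonpos_nonneg[of "p-1" "x powr (p-1-1)"] by auto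
qed
lemma powr_convex0:
  assumes "p \<ge> 1" shows "convex_on {0..} (\<lambda>x::real. x powr p)"
proof (rule convex_on_linorderI)
  fix t x y :: real assume t: "0 < t" "t < 1" and xy: "x \<in> {0..}" "y \<in> {0..}" "x < y"
  show "((1 - t) *\<^sub>R x + t *\<^sub>R y) powr p \<le> (1 - t) * x powr p + t * y powr p"
  proof (cases "x = 0")
    case True
    have "t powr p \<le> t powr 1" using t assms by (intro powr_mono') auto
    then have "t powr p * y powr p \<le> t * y powr p" using t by (intro mult_right_mono) (auto simp: abs_of_pos)
    then show ?thesis using True t xy assms by (simp add: powr_mult)
  next
    case False
    then show ?thesis using convex_onD[OF powr_convex[OF assms], of t x y] t xy by auto
  qed
qed (simp add: convex_real_interval)

lemma powr_concave0:
  assumes "0 < p" "p \<le> 1" shows "concave_on {0..} (\<lambda>x::real. x powr p)"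
proof (rule concave_on_linorderI)
  fix t x y :: real assume t: "0 < t" "t < 1" and xy: "x \<in> {0..}" "y \<in> {0..}" "x < y"
  show "((1 - t) *\<^sub>R x + t *\<^sub>R y) powr p \<ge> (1 - t) * x powr p + t * y powr p"
  proof (cases "x = 0")
    case True
    have "t powr p \<ge> t powr 1" using t assms by (intro powr_mono') auto
    then have "t powr p * y powr p \<ge> t * y powr p" using t by (intro mult_right_mono) (auto simp: abs_of_pos)
    then show ?thesis using True t xy assms by (simp add: powr_mult)
  next
    case False
    then show ?thesis using concave_onD[OF powr_concave'[OF assms], of t x y] t xy by auto
  qed
qed (simp add: convex_real_interval)


lemma concave_on_subset: "concave_on T f \<Longrightarrow> U \<subseteq> T \<Longrightarrow> convex U \<Longrightarrow> concave_on U f"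
  by (metis concave_on_def convex_on_subset)

lemma starG:
  fixes K L r :: real
  assumes "0 < K" "K \<le> L"
  shows "(r \<ge> 1 \<longrightarrow> K powr r * L * ((L+1) powr r - L powr r) \<le> L powr r * K * ((K+1) powr r - K powr r))
       \<and> (0 < r \<and> r \<le> 1 \<longrightarrow> K powr r * L * ((L+1) powr r - L powr r) \<ge> L powr r * K * ((K+1) powr r - K powr r))"
proof -
  have L: "L > 0" using assms by simp
  have e1: "(K*L+K) powr r = K powr r * (L+1) powr r" using assms L
    by (simp add: powr_mult[symmetric] distrib_left)
  have e2: "(K*L+L) powr r = L powr r * (K+1) powr r"
  proof -
    have "K*L+L = L*(K+1)" by (simp add: algebra_simps)
    then show ?thesis using assms L by (simp add: powr_mult)
  qed
  have e3: "(K*L) powr r = K powr r * L powr r" using assms L by (simp add: powr_mult)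
  have c: "K*L+K \<in> {K*L..K*L+L}" using assms by auto
  have sub: "{K*L..K*L+L} \<subseteq> {0..}" using assms L by auto
  have key: "L * (K powr r * (L+1) powr r) - L * (K powr r * L powr r)
      = K powr r * L * ((L+1) powr r - L powr r)" by (simp add: algebra_simps)
  have key2: "K * (L powr r * (K+1) powr r - K powr r * L powr r) = L powr r * K * ((K+1) powr r - K powr r)"
    by (simp add: algebra_simps)
  show ?thesis
  proof (intro conjI impI)
    assume r: "r \<ge> 1"
    have cv: "convex_on {K*L..K*L+L} (\<lambda>x. x powr r)"
      by (rule convex_on_subset[OF powr_convex0[OF r] sub]) (simp add: convex_real_interval)
    from convex_onD_Icc'[OF cv c]
    have "(K*L+K) powr r \<le> ((K*L+L) powr r - (K*L) powr r) / L * K + (K*L) powr r" by simp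
    then have "L * (K*L+K) powr r \<le> K * ((K*L+L) powr r - (K*L) powr r) + L * (K*L) powr r"
      using L by (simp add: field_simps)
    then show "K powr r * L * ((L+1) powr r - L powr r) \<le> L powr r * K * ((K+1) powr r - K powr r)"
      unfolding e1 e2 e3 using key key2 by (simp add: algebra_simps)
  next
    assume r: "0 < r \<and> r \<le> 1"
    have cv: "concave_on {K*L..K*L+L} (\<lambda>x. x powr r)"
      using r by (intro concave_on_subset[OF powr_concave0 sub]) (auto simp: convex_real_interval)
    from concave_onD_Icc'[OF cv c]
    have "(K*L+K) powr r \<ge> ((K*L+L) powr r - (K*L) powr r) / L * K + (K*L) powr r" by simp
    then have "L * (K*L+K) powr r \<ge> K * ((K*L+L) powr r - (K*L) powr r) + L * (K*L) powr r"
      using L by (simp add: field_simps)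
    then show "K powr r * L * ((L+1) powr r - L powr r) \<ge> L powr r * K * ((K+1) powr r - K powr r)"
      unfolding e1 e2 e3 using key key2 by (simp add: algebra_simps)
  qed
qed

lemma starH:
  fixes K L r :: real
  assumes "1 \<le> K" "K \<le> L"
  shows "(r \<ge> 1 \<longrightarrow> L powr r * K * (K powr r - (K-1) powr r) \<le> K powr r * L * (L powr r - (L-1) powr r))
       \<and> (0 < r \<and> r \<le> 1 \<longrightarrow> L powr r * K * (K powr r - (K-1) powr r) \<ge> K powr r * L * (L powr r - (L-1) powr r))"
proof -
  have L: "L > 0" and K: "K > 0" using assms by simp_all
  have e1: "(K*L-K) powr r = K powr r * (L-1) powr r" using assms L
    by (simp add: powr_mult[symmetric] right_diff_distrib)
  have e2: "(K*L-L) powr r = L powr r * (K-1) powr r"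
  proof -
    have "K*L-L = L*(K-1)" by (simp add: algebra_simps)
    then show ?thesis using assms L by (simp add: powr_mult)
  qed
  have e3: "(K*L) powr r = K powr r * L powr r" using assms L by (simp add: powr_mult)
  have c: "K*L-K \<in> {K*L-L..K*L}" using assms by auto
  have sub: "{K*L-L..K*L} \<subseteq> {0..}" using assms L
    by (auto simp: mult.commute[of K L])
  have key: "L * (K powr r * (L-1) powr r) = K powr r * L * (L-1) powr r" by (simp add: algebra_simps)
  show ?thesis
  proof (intro conjI impI)
    assume r: "r \<ge> 1"
    have cv: "convex_on {K*L-L..K*L} (\<lambda>x. x powr r)"
      by (rule convex_on_subset[OF powr_convex0[OF r] sub]) (simp add: convex_real_interval)
    from convex_onD_Icc''[OF cv c]
    have "(K*L-K) powr r \<le> ((K*L-L) powr r - (K*L) powr r) / L * (K*L - (K*L-K)) + (K*L) powr r" by simp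
    then have "L * (K*L-K) powr r \<le> K * ((K*L-L) powr r - (K*L) powr r) + L * (K*L) powr r"
      using L by (simp add: field_simps)
    then show "L powr r * K * (K powr r - (K-1) powr r) \<le> K powr r * L * (L powr r - (L-1) powr r)"
      unfolding e1 e2 e3 by (simp add: algebra_simps)
  next
    assume r: "0 < r \<and> r \<le> 1"
    have cv: "concave_on {K*L-L..K*L} (\<lambda>x. x powr r)"
      using r by (intro concave_on_subset[OF powr_concave0 sub]) (auto simp: convex_real_interval)
    from concave_onD_Icc''[OF cv c]
    have "(K*L-K) powr r \<ge> ((K*L-L) powr r - (K*L) powr r) / L * (K*L - (K*L-K)) + (K*L) powr r" by simp
    then have "L * (K*L-K) powr r \<ge> K * ((K*L-L) powr r - (K*L) powr r) + L * (K*L) powr r"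
      using L by (simp add: field_simps)
    then show "L powr r * K * (K powr r - (K-1) powr r) \<ge> K powr r * L * (L powr r - (L-1) powr r)"
      unfolding e1 e2 e3 by (simp add: algebra_simps)
  qed
qed


lemma mediant:
  fixes a b :: "nat \<Rightarrow> real"
  assumes "\<And>k. k \<in> {1..m} \<Longrightarrow> a k * b (Suc m) \<le> a (Suc m) * b k"
  shows "(\<Sum>k=1..m. a k) * (\<Sum>k=1..Suc m. b k) \<le> (\<Sum>k=1..Suc m. a k) * (\<Sum>k=1..m. b k)"
proof -
  have "(\<Sum>k=1..m. a k) * b (Suc m) = (\<Sum>k=1..m. a k * b (Suc m))" by (simp add: sum_distrib_right)
  also have "\<dots> \<le> (\<Sum>k=1..m. a (Suc m) * b k)" by (rule sum_mono) (use assms in auto)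
  also have "\<dots> = a (Suc m) * (\<Sum>k=1..m. b k)" by (simp add: sum_distrib_left)
  finally have *: "(\<Sum>k=1..m. a k) * b (Suc m) \<le> a (Suc m) * (\<Sum>k=1..m. b k)" .
  show ?thesis using * by (simp add: algebra_simps)
qed

lemma telG: "(\<Sum>k=1..m. real k * real (k+1) powr r - (real k - 1) * real k powr r) = real m * real (m+1) powr r"
  by (induction m) (auto simp: algebra_simps)

lemma telH: "(\<Sum>k=1..m. real (k+1) * real k powr r - real k * (real k - 1) powr r) = real (m+1) * real m powr r"
proof (induction m)
  case 0 then show ?case by simp
next
  case (Suc m)
  then show ?case by (simp add: algebra_simps)
qed

lemma S_Suc: "S (Suc m) r = S m r + real (Suc m) powr r"
  by (simp add: S_def)

lemma G:
  fixes r :: real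
  shows "(r \<ge> 1 \<longrightarrow> S m r * (real (m+1) * real (m+2) powr r) \<le> S (m+1) r * (real m * real (m+1) powr r))
       \<and> (0 < r \<and> r \<le> 1 \<longrightarrow> S m r * (real (m+1) * real (m+2) powr r) \<ge> S (m+1) r * (real m * real (m+1) powr r))"
proof -
  define a where "a = (\<lambda>k::nat. real k powr r)"
  define b where "b = (\<lambda>k::nat. real k * real (k+1) powr r - (real k - 1) * real k powr r)"
  have SA: "S j r = (\<Sum>k=1..j. a k)" for j by (simp add: S_def a_def)
  have SB: "(\<Sum>k=1..j. b k) = real j * real (j+1) powr r" for j unfolding b_def by (rule telG)
  have cond: "(r \<ge> 1 \<longrightarrow> a k * b (Suc m) \<le> a (Suc m) * b k) \<and> (0 < r \<and> r \<le> 1 \<longrightarrow> a k * b (Suc m) \<ge> a (Suc m) * b k)"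
    if "k \<in> {1..m}" for k
  proof -
    have "0 < real k" "real k \<le> real (Suc m)" using that by auto
    from starG[OF this, of r]
    show ?thesis unfolding a_def b_def by (simp add: algebra_simps)
  qed
  show ?thesis
  proof (intro conjI impI)
    assume r: "r \<ge> 1"
    have "(\<Sum>k=1..m. a k) * (\<Sum>k=1..Suc m. b k) \<le> (\<Sum>k=1..Suc m. a k) * (\<Sum>k=1..m. b k)"
      by (rule mediant) (use cond r in blast)
    then show "S m r * (real (m+1) * real (m+2) powr r) \<le> S (m+1) r * (real m * real (m+1) powr r)"
      unfolding SA using SB[of m] SB[of "Suc m"] by simp
  next
    assume r: "0 < r \<and> r \<le> 1"
    have "(\<Sum>k=1..m. b k) * (\<Sum>k=1..Suc m. a k) \<le> (\<Sum>k=1..Suc m. b k) * (\<Sum>k=1..m. a k)"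
      by (rule mediant) (use cond r in \<open>auto simp: mult.commute\<close>)
    then show "S m r * (real (m+1) * real (m+2) powr r) \<ge> S (m+1) r * (real m * real (m+1) powr r)"
      unfolding SA using SB[of m] SB[of "Suc m"] by (simp add: mult.commute)
  qed
qed

lemma H:
  fixes r :: real
  shows "(r \<ge> 1 \<longrightarrow> S (m+1) r * (real (m+1) * real m powr r) \<le> S m r * (real (m+2) * real (m+1) powr r))
       \<and> (0 < r \<and> r \<le> 1 \<longrightarrow> S (m+1) r * (real (m+1) * real m powr r) \<ge> S m r * (real (m+2) * real (m+1) powr r))"
proof -
  define a where "a = (\<lambda>k::nat. real k powr r)"
  define b where "b = (\<lambda>k::nat. real (k+1) * real k powr r - real k * (real k - 1) powr r)"
  have SA: "S j r = (\<Sum>k=1..j. a k)" for j by (simp add: S_def a_def)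
  have SB: "(\<Sum>k=1..j. b k) = real (j+1) * real j powr r" for j unfolding b_def by (rule telH)
  have cond: "(r \<ge> 1 \<longrightarrow> b k * a (Suc m) \<le> b (Suc m) * a k) \<and> (0 < r \<and> r \<le> 1 \<longrightarrow> b k * a (Suc m) \<ge> b (Suc m) * a k)"
    if "k \<in> {1..m}" for k
  proof -
    have "1 \<le> real k" "real k \<le> real (Suc m)" using that by auto
    from starH[OF this, of r]
    show ?thesis unfolding a_def b_def by (simp add: algebra_simps)
  qed
  show ?thesis
  proof (intro conjI impI)
    assume r: "r \<ge> 1"
    have "(\<Sum>k=1..m. b k) * (\<Sum>k=1..Suc m. a k) \<le> (\<Sum>k=1..Suc m. b k) * (\<Sum>k=1..m. a k)"
      by (rule mediant) (use cond r in blast)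
    then show "S (m+1) r * (real (m+1) * real m powr r) \<le> S m r * (real (m+2) * real (m+1) powr r)"
      unfolding SA using SB[of m] SB[of "Suc m"] by (simp add: mult.commute)
  next
    assume r: "0 < r \<and> r \<le> 1"
    have "(\<Sum>k=1..m. a k) * (\<Sum>k=1..Suc m. b k) \<le> (\<Sum>k=1..Suc m. a k) * (\<Sum>k=1..m. b k)"
      by (rule mediant) (use cond r in \<open>auto simp: mult.commute\<close>)
    then show "S (m+1) r * (real (m+1) * real m powr r) \<ge> S m r * (real (m+2) * real (m+1) powr r)"
      unfolding SA using SB[of m] SB[of "Suc m"] by (simp add: mult.commute)
  qed
qed


lemma fr_le: fixes x y w z :: real
  assumes "y > 0" "z > 0" "x * z - w * y \<le> 0" shows "x / y \<le> w / z"
  using assms by (subst frac_le_eq) (auto simp: divide_nonpos_pos)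

lemma L1:
  fixes N p q A B :: real
  assumes "N \<ge> 1" "p > 0" "q > 0" "A > 0" "B = A + q"
  shows "(B * ((N+1) * p) \<le> A * ((N+2) * q) \<longrightarrow> p/q * (1 + 1/(N*(N+2))) \<le> (N+1)*A/(N*B))
       \<and> (B * ((N+1) * p) \<ge> A * ((N+2) * q) \<longrightarrow> p/q * (1 + 1/(N*(N+2))) \<ge> (N+1)*A/(N*B))"
proof -
  have nz: "N*(N+2) \<noteq> 0" "q \<noteq> 0" using assms by auto
  have e1: "1 + 1/(N*(N+2)) = (N+1)*(N+1)/(N*(N+2))"
    using nz by (simp add: divide_simps) (simp add: algebra_simps)
  have e: "p/q * (1 + 1/(N*(N+2))) = (p*(N+1)*(N+1)) / (q*(N*(N+2)))" unfolding e1 by simp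
  have d: "(p * (N + 1) * (N + 1) * (N * B) - (N + 1) * A * (q * (N * (N + 2)))) = N*(N+1) * (B * ((N+1) * p) - A * ((N+2) * q))"
      by (simp add: algebra_simps)
  have pos: "q*(N*(N+2)) > 0" "N*B > 0" "N*(N+1) > 0" using assms by auto
  show ?thesis unfolding e
  proof (intro conjI impI)
    assume h: "B * ((N+1) * p) \<le> A * ((N+2) * q)"
    show "(p*(N+1)*(N+1)) / (q*(N*(N+2))) \<le> (N+1)*A/(N*B)"
      using pos h by (intro fr_le) (auto simp: d intro!: mult_nonneg_nonpos)
  next
    assume h: "B * ((N+1) * p) \<ge> A * ((N+2) * q)"
    show "(p*(N+1)*(N+1)) / (q*(N*(N+2))) \<ge> (N+1)*A/(N*B)"
    proof (intro fr_le)
      have "(N + 1) * A * (q * (N * (N + 2))) - p * (N + 1) * (N + 1) * (N * B) = N*(N+1) * (A * ((N+2) * q) - B * ((N+1) * p))"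
        by (simp add: algebra_simps)
      also have "\<dots> \<le> 0" using pos h by (intro mult_nonneg_nonpos) auto
      finally show "(N + 1) * A * (q * (N * (N + 2))) - p * (N + 1) * (N + 1) * (N * B) \<le> 0" .
    qed (use pos in auto)
  qed
qed

lemma U1:
  fixes N p q A A' B :: real
  assumes "N \<ge> 1" "p > 0" "q > 0" "A' \<ge> 0" "A = A' + p" "B = A + q"
  shows "(A' * (N * q) \<le> A * ((N-1) * p) \<longrightarrow> (N+1)*A/(N*B) \<le> p/q * (1 + ((N+1)*q - B)/(N^2 * B)))
       \<and> (A' * (N * q) \<ge> A * ((N-1) * p) \<longrightarrow> (N+1)*A/(N*B) \<ge> p/q * (1 + ((N+1)*q - B)/(N^2 * B)))"
proof -
  have nz: "N^2*B \<noteq> 0" "q \<noteq> 0" using assms by auto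
  have e1: "1 + ((N+1)*q - B)/(N^2 * B) = (N^2*B + (N+1)*q - B)/(N^2*B)"
    using nz by (simp add: divide_simps)
  have e: "p/q * (1 + ((N+1)*q - B)/(N^2 * B)) = p*(N^2*B + (N+1)*q - B) / (q*(N^2*B))" unfolding e1 by simp
  have d: "(N+1)*A * (q*(N^2*B)) - p*(N^2*B + (N+1)*q - B) * (N*B) = N*B*(N+1) * (A' * (N * q) - A * ((N-1) * p))"
    using assms by (simp add: algebra_simps power2_eq_square)
  have pos: "q*(N^2*B) > 0" "N*B > 0" "N*B*(N+1) > 0" using assms by auto
  show ?thesis unfolding e
  proof (intro conjI impI)
    assume h: "A' * (N * q) \<le> A * ((N-1) * p)"
    show "(N+1)*A/(N*B) \<le> p*(N^2*B + (N+1)*q - B) / (q*(N^2*B))"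
      using pos h by (intro fr_le) (auto simp: d intro!: mult_nonneg_nonpos)
  next
    assume h: "A' * (N * q) \<ge> A * ((N-1) * p)"
    show "(N+1)*A/(N*B) \<ge> p*(N^2*B + (N+1)*q - B) / (q*(N^2*B))"
    proof (intro fr_le)
      have "p*(N^2*B + (N+1)*q - B) * (N*B) - (N+1)*A * (q*(N^2*B)) = N*B*(N+1) * (A * ((N-1) * p) - A' * (N * q))"
        using d by (simp add: algebra_simps)
      also have "\<dots> \<le> 0" using pos h by (intro mult_nonneg_nonpos) auto
      finally show "p*(N^2*B + (N+1)*q - B) * (N*B) - (N+1)*A * (q*(N^2*B)) \<le> 0" .
    qed (use pos in auto)
  qed
qed

lemma pmono:
  fixes r a b c :: real
  assumes "r > 0" "0 \<le> a" "0 \<le> b" "a * b \<le> c"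
  shows "a powr (1/r) * b powr (1/r) \<le> c powr (1/r)"
  using assms by (simp add: powr_mult[symmetric] powr_mono2)

lemma pmono':
  fixes r a b c :: real
  assumes "r > 0" "0 \<le> c" "c \<le> a * b"
  shows "c powr (1/r) \<le> a powr (1/r) * b powr (1/r)"
proof -
  have "0 \<le> a * b" using assms by linarith
  then show ?thesis
    using assms by (cases "a \<ge> 0") (auto simp: powr_mult[symmetric] powr_mono2 mult_nonneg_nonneg zero_le_mult_iff)
qed

theorem corollary2p3:
  fixes r :: real and n :: nat
  assumes "n \<ge> 1"
  shows "(r \<ge> 1 \<longrightarrow>
           real n / real (n+1) * (1 + 1 / (real n * real (n+2))) powr (1/r)
             \<le> ((real (n+1) * S n r) / (real n * S (n+1) r)) powr (1/r)
         \<and> ((real (n+1) * S n r) / (real n * S (n+1) r)) powr (1/r)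
             \<le> real n / real (n+1) *
               (1 + (real (n+1) powr (r+1) - S (n+1) r) / ((real n)^2 * S (n+1) r)) powr (1/r))
       \<and> (0 < r \<and> r \<le> 1 \<longrightarrow>
           real n / real (n+1) * (1 + 1 / (real n * real (n+2))) powr (1/r)
             \<ge> ((real (n+1) * S n r) / (real n * S (n+1) r)) powr (1/r)
         \<and> ((real (n+1) * S n r) / (real n * S (n+1) r)) powr (1/r)
             \<ge> real n / real (n+1) *
               (1 + (real (n+1) powr (r+1) - S (n+1) r) / ((real n)^2 * S (n+1) r)) powr (1/r))"
proof -
  obtain m where m: "n = Suc m" using assms by (cases n) auto
  define N where "N = real n"
  define p where "p = N powr r"
  define q where "q = (N+1) powr r"
  define A where "A = S n r"
  define B where "B = S (n+1) r"
  define A' where "A' = S m r"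
  have N1: "N \<ge> 1" using assms by (simp add: N_def)
  have pq: "p > 0" "q > 0" using N1 by (auto simp: p_def q_def)
  have BA: "B = A + q" using S_Suc[of n r] by (simp add: B_def A_def q_def N_def add.commute)
  have AA: "A = A' + p" by (simp add: A_def A'_def p_def N_def m S_Suc)
  have A'0: "A' \<ge> 0" by (simp add: A'_def S_def sum_nonneg)
  have A0: "A > 0" using AA A'0 pq by simp
  have B0: "B > 0" using BA A0 pq by simp
  have Hn: "(r \<ge> 1 \<longrightarrow> B * ((N+1) * p) \<le> A * ((N+2) * q))
       \<and> (0 < r \<and> r \<le> 1 \<longrightarrow> B * ((N+1) * p) \<ge> A * ((N+2) * q))"
    using H[of r n] by (simp add: A_def B_def N_def p_def q_def add.commute)
  have Gm: "(r \<ge> 1 \<longrightarrow> A' * (N * q) \<le> A * ((N-1) * p))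
       \<and> (0 < r \<and> r \<le> 1 \<longrightarrow> A' * (N * q) \<ge> A * ((N-1) * p))"
    using G[of r m] by (simp add: A_def A'_def N_def p_def q_def m add.commute)
  have L: "(B * ((N+1) * p) \<le> A * ((N+2) * q) \<longrightarrow> p/q * (1 + 1/(N*(N+2))) \<le> (N+1)*A/(N*B))
       \<and> (B * ((N+1) * p) \<ge> A * ((N+2) * q) \<longrightarrow> p/q * (1 + 1/(N*(N+2))) \<ge> (N+1)*A/(N*B))"
    by (rule L1[OF N1 pq A0 BA])
  have U: "(A' * (N * q) \<le> A * ((N-1) * p) \<longrightarrow> (N+1)*A/(N*B) \<le> p/q * (1 + ((N+1)*q - B)/(N^2 * B)))
       \<and> (A' * (N * q) \<ge> A * ((N-1) * p) \<longrightarrow> (N+1)*A/(N*B) \<ge> p/q * (1 + ((N+1)*q - B)/(N^2 * B)))"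
    by (rule U1[OF N1 pq A'0 AA BA])
  have D0: "1 + ((N+1)*q - B)/(N^2 * B) \<ge> 0"
  proof -
    have "N^2 * B > 0" using N1 B0 by simp
    moreover have "N^2 * B \<ge> 1 * B" using N1 B0 by (intro mult_right_mono) (auto simp: one_le_power)
    moreover have "(N+1)*q > 0" using pq N1 by simp
    ultimately have h: "-(N^2*B) \<le> (N+1)*q - B" "N^2 * B > 0" by linarith+
    then have "((N+1)*q - B)/(N^2 * B) \<ge> -1"
      by (simp add: le_divide_eq)
    then show ?thesis by simp
  qed
  have c0: "1 + 1/(N*(N+2)) \<ge> 0" using N1 by simp
  have X0: "(N+1)*A/(N*B) \<ge> 0" using N1 A0 B0 by simp
  have pq0: "p/q \<ge> 0" using pq by simp
  have R: "(p/q) powr (1/r) = N/(N+1)" if "r > 0"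
  proof -
    have "p/q = (N/(N+1)) powr r" using N1 by (simp add: p_def q_def powr_divide)
    then show ?thesis using that N1 by (simp add: powr_powr)
  qed
  have E: "real (n+1) powr (r+1) = (N+1)*q"
    using N1 by (simp add: N_def q_def powr_add add.commute mult.commute)
  have st: "real n / real (n+1) = N/(N+1)" "real n * real (n+2) = N*(N+2)"
     "real (n+1) * S n r / (real n * S (n+1) r) = (N+1)*A/(N*B)"
    by (simp_all add: N_def A_def B_def)
  have st2: "(real (n+1) powr (r+1) - S (n+1) r) / ((real n)^2 * S (n+1) r) = ((N+1)*q - B)/(N^2 * B)"
    unfolding E by (simp add: N_def B_def)
  show ?thesis unfolding st st2
  proof (intro conjI impI)
    assume r: "r \<ge> 1"
    then have r0: "r > 0" by simp
    show "N / (N + 1) * (1 + 1 / (N * (N + 2))) powr (1 / r) \<le> ((N + 1) * A / (N * B)) powr (1 / r)"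
      unfolding R[OF r0, symmetric] using L Hn r by (intro pmono[OF r0 pq0 c0]) auto
    show "((N + 1) * A / (N * B)) powr (1 / r) \<le> N / (N + 1) * (1 + ((N + 1) * q - B) / (N\<^sup>2 * B)) powr (1 / r)"
      unfolding R[OF r0, symmetric] using U Gm r X0 by (intro pmono'[OF r0]) auto
  next
    assume r: "0 < r \<and> r \<le> 1"
    then have r0: "r > 0" by simp
    show "N / (N + 1) * (1 + 1 / (N * (N + 2))) powr (1 / r) \<ge> ((N + 1) * A / (N * B)) powr (1 / r)"
      unfolding R[OF r0, symmetric] using L Hn r X0 by (intro pmono'[OF r0]) auto
    show "((N + 1) * A / (N * B)) powr (1 / r) \<ge> N / (N + 1) * (1 + ((N + 1) * q - B) / (N\<^sup>2 * B)) powr (1 / r)"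
      unfolding R[OF r0, symmetric] using U Gm r by (intro pmono[OF r0 pq0 D0]) auto
  qed
qed

end
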